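(* Let $G$ be a group with multiplication $\mu$ and neutral element $e$, acting partially on a set $X$ via subsets $X_g\subseteq X$ and bijections $\alpha_g:X_{g^{-1}}\to X_g$ ($g\in G$). Put $G\bullet X=\{(g,x)\in G\times X\mid x\in X_{g^{-1}}\}$, let $\iota:G\bullet X\to G\times X$ be the inclusion and $\alpha:G\bullet X\to X$, $\alpha(g,x)=\alpha_g(x)$. On $G\times X$ define $(g,x)\sim(h,y)$ iff $(h^{-1}g,x)\in G\bullet X$ and $\alpha(h^{-1}g,x)=y$. Then the quotient set $Y=(G\times X)/\!\sim$, with the canonical projection $G\times X\to Y$, $(g,x)\mapsto[g,x]$, is the coequalizer in $\mathsf{Set}$ of the pair of maps $$G\times\alpha,\ \ (\mu\times X)\circ(G\times\iota)\ :\ G\times(G\bullet X)\longrightarrow G\times X.$$ Consequently, the globalization of this partial action is given exactly by this coequalizer.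
   Context: A partial action of a group $G$ on a set $X$ consists of subsets $X_g\subseteq X$ and bijections $\alpha_g:X_{g^{-1}}\to X_g$ for $g\in G$ such that $X_e=X$, $\alpha_e=\mathrm{id}_X$, and for all $g,h\in G$ and $x\in X_{h^{-1}}$ with $\alpha_h(x)\in X_{g^{-1}}$ one has $x\in X_{(gh)^{-1}}$ and $\alpha_{gh}(x)=\alpha_g(\alpha_h(x))$. It is known that $\sim$ is an equivalence relation and that $Y=(G\times X)/\!\sim$ with the global action $h\cdot[g,x]=[hg,x]$ is the globalization (enveloping action) of the partial action, i.e. the smallest $G$-set containing $X$ such that the partial action is the restriction of the global one. *)

theory Defs
  imports "HOL-Algebra.Group" "HOL-Library.FuncSet"
begin

definition partial_action ::
  "('g, 'm) monoid_scheme \<Rightarrow> 'x set \<Rightarrow> ('g \<Rightarrow> 'x set) \<Rightarrow> ('g \<Rightarrow> 'x \<Rightarrow> 'x) \<Rightarrow> bool" where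
  "partial_action G X D act \<longleftrightarrow>
     (\<forall>g\<in>carrier G. D g \<subseteq> X) \<and>
     (\<forall>g\<in>carrier G. bij_betw (act g) (D (inv\<^bsub>G\<^esub> g)) (D g)) \<and>
     D \<one>\<^bsub>G\<^esub> = X \<and>
     (\<forall>x\<in>X. act \<one>\<^bsub>G\<^esub> x = x) \<and>
     (\<forall>g\<in>carrier G. \<forall>h\<in>carrier G. \<forall>x\<in>D (inv\<^bsub>G\<^esub> h).
        act h x \<in> D (inv\<^bsub>G\<^esub> g) \<longrightarrow>
          x \<in> D (inv\<^bsub>G\<^esub> (g \<otimes>\<^bsub>G\<^esub> h)) \<and> act (g \<otimes>\<^bsub>G\<^esub> h) x = act g (act h x))"

definition pdom :: "('g, 'm) monoid_scheme \<Rightarrow> 'x set \<Rightarrow> ('g \<Rightarrow> 'x set) \<Rightarrow> ('g \<times> 'x) set" where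
  "pdom G X D = {(g, x). g \<in> carrier G \<and> x \<in> X \<and> x \<in> D (inv\<^bsub>G\<^esub> g)}"

definition glob_rel ::
  "('g, 'm) monoid_scheme \<Rightarrow> 'x set \<Rightarrow> ('g \<Rightarrow> 'x set) \<Rightarrow> ('g \<Rightarrow> 'x \<Rightarrow> 'x) \<Rightarrow> (('g \<times> 'x) \<times> ('g \<times> 'x)) set" where
  "glob_rel G X D act = {((g, x), (h, y)). (g, x) \<in> carrier G \<times> X \<and> (h, y) \<in> carrier G \<times> X \<and>
      (inv\<^bsub>G\<^esub> h \<otimes>\<^bsub>G\<^esub> g, x) \<in> pdom G X D \<and> act (inv\<^bsub>G\<^esub> h \<otimes>\<^bsub>G\<^esub> g) x = y}"

text \<open>The universal property is
  tested against all sets C of an arbitrary type 'c (the type is universally quantified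
  at the theorem level). Maps out of Q are taken extensional so that uniqueness is meaningful.\<close>
definition is_coequalizer ::
  "'a set \<Rightarrow> 'b set \<Rightarrow> ('a \<Rightarrow> 'b) \<Rightarrow> ('a \<Rightarrow> 'b) \<Rightarrow> 'q set \<Rightarrow> ('b \<Rightarrow> 'q) \<Rightarrow> 'c itself \<Rightarrow> bool" where
  "is_coequalizer A B f g Q q _ \<longleftrightarrow>
     f \<in> A \<rightarrow> B \<and> g \<in> A \<rightarrow> B \<and> q \<in> B \<rightarrow> Q \<and>
     (\<forall>a\<in>A. q (f a) = q (g a)) \<and>
     (\<forall>(C :: 'c set) h. h \<in> B \<rightarrow> C \<and> (\<forall>a\<in>A. h (f a) = h (g a)) \<longrightarrow>
        (\<exists>!u. u \<in> Q \<rightarrow>\<^sub>E C \<and> (\<forall>b\<in>B. u (q b) = h b)))"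

end

theory Submission
  imports Defs
begin

lemma glob_rel_equiv:
  fixes G (structure)
  assumes grp: "group G" and pa: "partial_action G X D act"
  shows "equiv (carrier G \<times> X) (glob_rel G X D act)"
proof -
  interpret group G by (rule grp)
  from pa have Dsub: "\<And>g. g \<in> carrier G \<Longrightarrow> D g \<subseteq> X"
    and bij: "\<And>g. g \<in> carrier G \<Longrightarrow> bij_betw (act g) (D (inv g)) (D g)"
    and D1: "D \<one> = X" and a1: "\<And>x. x \<in> X \<Longrightarrow> act \<one> x = x"
    and comp: "\<And>g h x. g \<in> carrier G \<Longrightarrow> h \<in> carrier G \<Longrightarrow> x \<in> D (inv h) \<Longrightarrow>
        act h x \<in> D (inv g) \<Longrightarrow> x \<in> D (inv (g \<otimes> h)) \<and> act (g \<otimes> h) x = act g (act h x)"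
    unfolding partial_action_def by blast+
  have actD: "act g x \<in> D g" if "g \<in> carrier G" "x \<in> D (inv g)" for g x
    using bij_betw_apply[OF bij[OF that(1)] that(2)] .
  show ?thesis
  proof (rule equivI)
    show "glob_rel G X D act \<subseteq> (carrier G \<times> X) \<times> (carrier G \<times> X)"
      unfolding glob_rel_def by auto
  next
    show "refl_on (carrier G \<times> X) (glob_rel G X D act)"
    proof (rule refl_onI)
      fix p assume "p \<in> carrier G \<times> X"
      then obtain g x where p: "p = (g, x)" "g \<in> carrier G" "x \<in> X" by auto
      then show "(p, p) \<in> glob_rel G X D act"
        unfolding glob_rel_def pdom_def using D1 a1 by auto
    qed
  next
    show "sym (glob_rel G X D act)"
    proof (rule symI)
      fix a b assume ab: "(a, b) \<in> glob_rel G X D act"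
      obtain g x h y where ab': "a = (g, x)" "b = (h, y)" by (cases a, cases b) auto
      define m where "m = inv h \<otimes> g"
      from ab ab' have g: "g \<in> carrier G" and x: "x \<in> X" and h: "h \<in> carrier G" and y: "y \<in> X"
        and xD: "x \<in> D (inv m)" and ye: "act m x = y"
        unfolding glob_rel_def pdom_def m_def by auto
      have m: "m \<in> carrier G" using g h m_def by simp
      have im: "inv g \<otimes> h = inv m" unfolding m_def using g h by (simp add: inv_mult_group)
      have yD: "y \<in> D m" using actD[OF m xD] ye by simp
      have "act (inv m \<otimes> m) x = act (inv m) (act m x)"
        using comp[of "inv m" m x] m xD yD ye by simp
      hence "act (inv m) y = x" using ye m a1 x by simp
      then show "(b, a) \<in> glob_rel G X D act"
        unfolding glob_rel_def pdom_def using ab' g h x y yD m by (simp add: im)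
    qed
  next
    show "trans (glob_rel G X D act)"
    proof (rule transI)
      fix a b c assume ab: "(a, b) \<in> glob_rel G X D act" and bc: "(b, c) \<in> glob_rel G X D act"
      obtain g x h y k z where abc: "a = (g, x)" "b = (h, y)" "c = (k, z)"
        by (cases a, cases b, cases c) auto
      define m where "m = inv h \<otimes> g"
      define n where "n = inv k \<otimes> h"
      from ab bc abc have g: "g \<in> carrier G" and x: "x \<in> X" and h: "h \<in> carrier G" and y: "y \<in> X"
        and k: "k \<in> carrier G" and z: "z \<in> X"
        and xD: "x \<in> D (inv m)" and ye: "act m x = y"
        and yD: "y \<in> D (inv n)" and ze: "act n y = z"
        unfolding glob_rel_def pdom_def m_def n_def by auto
      have m: "m \<in> carrier G" and n: "n \<in> carrier G" using g h k m_def n_def by auto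
      have nm: "n \<otimes> m = inv k \<otimes> g" unfolding m_def n_def using g h k
        by (simp add: m_assoc[symmetric]) (simp add: m_assoc)
      from comp[OF n m xD] yD ye ze
      have "x \<in> D (inv (n \<otimes> m)) \<and> act (n \<otimes> m) x = z" by simp
      then show "(a, c) \<in> glob_rel G X D act"
        unfolding glob_rel_def pdom_def using abc g k x z nm by auto
    qed
  qed
qed

theorem proposition3p4:
  fixes G (structure) and X :: "'x set" and D :: "'g \<Rightarrow> 'x set" and act :: "'g \<Rightarrow> 'x \<Rightarrow> 'x"
  assumes "group G"
    and "partial_action G X D act"
  shows "is_coequalizer
           (carrier G \<times> pdom G X D)
           (carrier G \<times> X)
           (\<lambda>(k, (g, x)). (k, act g x))
           (\<lambda>(k, (g, x)). (k \<otimes> g, x))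
           ((carrier G \<times> X) // glob_rel G X D act)
           (\<lambda>p. glob_rel G X D act `` {p})
           TYPE('c)"
proof -
  interpret group G by (rule assms(1))
  define R where "R = glob_rel G X D act"
  have eq: "equiv (carrier G \<times> X) R" unfolding R_def by (rule glob_rel_equiv[OF assms])
  from assms(2) have Dsub: "\<And>g. g \<in> carrier G \<Longrightarrow> D g \<subseteq> X"
    and bij: "\<And>g. g \<in> carrier G \<Longrightarrow> bij_betw (act g) (D (inv g)) (D g)"
    unfolding partial_action_def by blast+
  have actX: "act g x \<in> X" if "g \<in> carrier G" "x \<in> D (inv g)" for g x
  proof -
    have "act g x \<in> D g" using bij_betw_apply[OF bij[OF that(1)] that(2)] .
    then show ?thesis using Dsub[OF that(1)] by blast
  qed
  have f: "(\<lambda>(k, (g, x)). (k, act g x)) \<in> carrier G \<times> pdom G X D \<rightarrow> carrier G \<times> X"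
    unfolding pdom_def using actX by auto
  have g: "(\<lambda>(k, (g, x)). (k \<otimes> g, x)) \<in> carrier G \<times> pdom G X D \<rightarrow> carrier G \<times> X"
    unfolding pdom_def by auto
  have q: "(\<lambda>p. R `` {p}) \<in> carrier G \<times> X \<rightarrow> (carrier G \<times> X) // R"
    by (auto intro: quotientI)
  have rel: "((k \<otimes> g, x), (k, act g x)) \<in> R" if "k \<in> carrier G" "(g, x) \<in> pdom G X D" for k g x
  proof -
    have e: "inv k \<otimes> (k \<otimes> g) = g" using that unfolding pdom_def
      by (simp add: m_assoc[symmetric])
    have "act g x \<in> X" using that actX unfolding pdom_def by simp
    then show ?thesis using that unfolding R_def glob_rel_def
      by (simp add: e) (simp add: pdom_def)
  qed
  have coeq: "\<forall>a\<in>carrier G \<times> pdom G X D.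
      R `` {(\<lambda>(k, (g, x)). (k, act g x)) a} = R `` {(\<lambda>(k, (g, x)). (k \<otimes> g, x)) a}"
  proof
    fix a assume a: "a \<in> carrier G \<times> pdom G X D"
    then obtain k g x where a': "a = (k, (g, x))" "k \<in> carrier G" "(g, x) \<in> pdom G X D" by auto
    have "R `` {(k \<otimes> g, x)} = R `` {(k, act g x)}"
      using equiv_class_eq[OF eq rel[OF a'(2,3)]] .
    then show "R `` {(\<lambda>(k, (g, x)). (k, act g x)) a} = R `` {(\<lambda>(k, (g, x)). (k \<otimes> g, x)) a}"
      using a' by simp
  qed
  have univ: "\<exists>!u. u \<in> (carrier G \<times> X) // R \<rightarrow>\<^sub>E C \<and> (\<forall>b\<in>carrier G \<times> X. u (R `` {b}) = h b)"
    if hB: "h \<in> carrier G \<times> X \<rightarrow> C"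
      and hc: "\<forall>a\<in>carrier G \<times> pdom G X D. h ((\<lambda>(k, (g, x)). (k, act g x)) a) = h ((\<lambda>(k, (g, x)). (k \<otimes> g, x)) a)"
    for C :: "'c set" and h
  proof -
    have hR: "h b = h b'" if bb: "(b, b') \<in> R" for b b'
    proof -
      obtain g x k y where b: "b = (g, x)" "b' = (k, y)" by (cases b, cases b') auto
      define m where "m = inv k \<otimes> g"
      from bb b have gk: "g \<in> carrier G" "k \<in> carrier G" and mp: "(m, x) \<in> pdom G X D"
        and ye: "act m x = y"
        unfolding R_def glob_rel_def m_def by auto
      have "k \<otimes> m = g" unfolding m_def using gk by (simp add: m_assoc[symmetric])
      moreover have "m \<in> carrier G" using gk m_def by simp
      moreover have "h (k, act m x) = h (k \<otimes> m, x)"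
      proof -
        have "(k, (m, x)) \<in> carrier G \<times> pdom G X D" using gk mp by blast
        from bspec[OF hc this] show ?thesis by simp
      qed
      ultimately show ?thesis using b ye by simp
    qed
    define u where "u = (\<lambda>c \<in> (carrier G \<times> X) // R. h (SOME b. b \<in> c))"
    have ub: "u (R `` {b}) = h b" if b: "b \<in> carrier G \<times> X" for b
    proof -
      have bin: "b \<in> R `` {b}" using eq b unfolding equiv_def refl_on_def by blast
      hence "(SOME b'. b' \<in> R `` {b}) \<in> R `` {b}" by (rule someI)
      hence bs: "(b, SOME b'. b' \<in> R `` {b}) \<in> R" by simp
      have "h (SOME b'. b' \<in> R `` {b}) = h b" using hR[OF bs] by simp
      moreover have "R `` {b} \<in> (carrier G \<times> X) // R" using b by (rule quotientI)
      ultimately show ?thesis unfolding u_def by simp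
    qed
    have uC: "u \<in> (carrier G \<times> X) // R \<rightarrow>\<^sub>E C"
    proof
      fix c assume "c \<in> (carrier G \<times> X) // R"
      then obtain b where b: "b \<in> carrier G \<times> X" "c = R `` {b}" by (blast elim: quotientE)
      have "h b \<in> C" using hB b(1) by (rule funcset_mem)
      then show "u c \<in> C" using ub[OF b(1)] b(2) by simp
    next
      fix c assume "c \<notin> (carrier G \<times> X) // R"
      then show "u c = undefined" unfolding u_def by simp
    qed
    show ?thesis
    proof (rule ex1I[of _ u])
      show "u \<in> (carrier G \<times> X) // R \<rightarrow>\<^sub>E C \<and> (\<forall>b\<in>carrier G \<times> X. u (R `` {b}) = h b)"
        using uC ub by blast
    next
      fix v assume v: "v \<in> (carrier G \<times> X) // R \<rightarrow>\<^sub>E C \<and> (\<forall>b\<in>carrier G \<times> X. v (R `` {b}) = h b)"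
      show "v = u"
      proof (rule extensionalityI)
        show "v \<in> extensional ((carrier G \<times> X) // R)" using v by (auto simp: PiE_def)
        show "u \<in> extensional ((carrier G \<times> X) // R)" using uC by (auto simp: PiE_def)
      next
        fix c assume "c \<in> (carrier G \<times> X) // R"
        then obtain b where b: "b \<in> carrier G \<times> X" "c = R `` {b}" by (blast elim: quotientE)
        have "v (R `` {b}) = h b" using v b(1) by blast
        then show "v c = u c" using ub[OF b(1)] b(2) by simp
      qed
    qed
  qed
  show ?thesis
    unfolding is_coequalizer_def R_def[symmetric]
  proof (intro conjI allI impI)
    fix C :: "'c set" and h
    assume A: "h \<in> carrier G \<times> X \<rightarrow> C \<and> (\<forall>a\<in>carrier G \<times> pdom G X D. h ((\<lambda>(k, (g, x)). (k, act g x)) a) = h ((\<lambda>(k, (g, x)). (k \<otimes> g, x)) a))"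
    show "\<exists>!u. u \<in> (carrier G \<times> X) // R \<rightarrow>\<^sub>E C \<and> (\<forall>b\<in>carrier G \<times> X. u (R `` {b}) = h b)"
      by (rule univ[OF conjunct1[OF A] conjunct2[OF A]])
  next
    show "(\<lambda>(k, (g, x)). (k, act g x)) \<in> carrier G \<times> pdom G X D \<rightarrow> carrier G \<times> X" by (rule f)
  next
    show "(\<lambda>(k, (g, x)). (k \<otimes> g, x)) \<in> carrier G \<times> pdom G X D \<rightarrow> carrier G \<times> X" by (rule g)
  next
    show "(\<lambda>p. R `` {p}) \<in> carrier G \<times> X \<rightarrow> (carrier G \<times> X) // R" by (rule q)
  next
    show "\<forall>a\<in>carrier G \<times> pdom G X D.
      R `` {(\<lambda>(k, (g, x)). (k, act g x)) a} = R `` {(\<lambda>(k, (g, x)). (k \<otimes> g, x)) a}" by (rule coeq)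
  qed
qed

end
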